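(* Let $\underline{t}$ and $\underline{u}$ be increment arrays for $n$ agents with $\underline{t}\not\approx\underline{u}$. Then \[\bigcup_{i=1}^{n}\{C(i,\underline{t})\}\;\cap\;\bigcup_{i=1}^{n}\{C(i,\underline{u})\}=\varnothing,\] i.e.\ no coalition is generated both by $\underline{t}$ (from some starting agent) and by $\underline{u}$ (from some starting agent).
   Context: Agent identifiers are $\{1,\ldots,n\}$, arithmetic on identifiers is modulo $n$ with representatives in $\{1,\ldots,n\}$ (a value $0$ is replaced by $n$). An increment array (IA) of size $s$ ($1\le s\le n$) for $n$ agents is a tuple $\underline{t}=\langle t_0,\ldots,t_{s-1}\rangle$ of non-negative integers with $\sum t_i=n-s$. Cumulative increments: $\varphi_1=0$, $\varphi_i=\sum_{k=0}^{i-2}(t_k+1)$ for $2\le i\le s+1$. The coalition generated from $x$ is $C(x,\underline{t})=\{x\}\cup\bigcup_{i=2}^{s}\{(x+\varphi_i)\bmod n\}$ (residues in $\{1,\ldots,n\}$). Two IAs are equivalent, $\underline{t}\approx\underline{u}$, if they have the same size $s$ and $\underline{u}$ is a circular shift of $\underline{t}$: there is $0\le k\le s-1$ with $\langle u_0,\ldots,u_{s-1}\rangle=\langle t_k,\ldots,t_{s-1},t_0,\ldots,t_{k-1}\rangle$. *)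

theory Defs
  imports Main
begin

text \<open>Agents are 1..n; residues modulo n taken in {1..n} (0 replaced by n).\<close>
definition modrep :: "nat \<Rightarrow> nat \<Rightarrow> nat" where
  "modrep n a = (if a mod n = 0 then n else a mod n)"

definition is_IA :: "nat \<Rightarrow> nat list \<Rightarrow> bool" where
  "is_IA n t \<longleftrightarrow> 1 \<le> length t \<and> length t \<le> n \<and> sum_list t = n - length t"

definition phi :: "nat list \<Rightarrow> nat \<Rightarrow> nat" where
  "phi t i = (\<Sum>k<i - 1. t ! k + 1)"

definition coalition :: "nat \<Rightarrow> nat \<Rightarrow> nat list \<Rightarrow> nat set" where
  "coalition n x t = {x} \<union> {modrep n (x + phi t i) | i. 2 \<le> i \<and> i \<le> length t}"

definition IA_equiv :: "nat list \<Rightarrow> nat list \<Rightarrow> bool" where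
  "IA_equiv t u \<longleftrightarrow> length t = length u \<and>
     (\<exists>k. k \<le> length t - 1 \<and> u = drop k t @ take k t)"

end

theory Submission
  imports Defs
begin

definition ps :: "nat list \<Rightarrow> nat \<Rightarrow> nat" where
  "ps t j = sum_list (take j t) + j"

definition pts :: "nat list \<Rightarrow> nat set" where
  "pts t = ps t ` {..<length t}"

definition RR :: "nat \<Rightarrow> nat \<Rightarrow> nat list \<Rightarrow> nat set" where
  "RR n x t = (\<lambda>p. (x + p) mod n) ` pts t"

abbreviation SS :: "nat list \<Rightarrow> nat" where
  "SS t \<equiv> sum_list t + length t"

lemma pts_Cons: "pts (a # t) = insert 0 ((+) (Suc a) ` pts t)"
proof -
  have "pts (a # t) = ps (a # t) ` insert 0 (Suc ` {..<length t})"
    unfolding pts_def by (simp add: lessThan_Suc_eq_insert_0)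
  also have "\<dots> = insert 0 ((+) (Suc a) ` pts t)"
    unfolding pts_def image_insert image_image by (simp add: ps_def add.assoc)
  finally show ?thesis .
qed

lemma pts_snoc: "pts (t @ [a]) = insert (SS t) (pts t)"
proof -
  have "pts (t @ [a]) = ps (t @ [a]) ` insert (length t) {..<length t}"
    unfolding pts_def by (simp add: lessThan_Suc)
  also have "\<dots> = insert (SS t) (pts t)"
    unfolding pts_def image_insert by (auto simp: ps_def)
  finally show ?thesis .
qed

lemma sum_take_le: "sum_list (take j t) \<le> sum_list (t::nat list)"
proof -
  have "sum_list t = sum_list (take j t) + sum_list (drop j t)"
    by (metis append_take_drop_id sum_list_append)
  then show ?thesis by simp
qed

lemma pts_bound: "p \<in> pts t \<Longrightarrow> p < SS t"
  unfolding pts_def ps_def using sum_take_le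
  by (auto intro: add_le_less_mono)

lemma zero_pts: "t \<noteq> [] \<Longrightarrow> 0 \<in> pts t"
  by (cases t) (auto simp: pts_Cons)

lemma pts_inj: "pts t = pts u \<Longrightarrow> SS t = SS u \<Longrightarrow> t = u"
proof (induction t arbitrary: u)
  case Nil
  then show ?case
    by (metis empty_iff image_empty lessThan_0 list.size(3) pts_def zero_pts)
next
  case (Cons a t)
  show ?case
  proof (cases u)
    case Nil
    then show ?thesis using Cons.prems zero_pts
      by (metis empty_iff image_empty lessThan_0 list.distinct(1) list.size(3) pts_def)
  next
    case (Cons b u')
    note P = Cons.prems(1)[unfolded Cons pts_Cons]
    show ?thesis
    proof (cases "t = []")
      case True
      have pt: "pts t = {}" using True by (simp add: pts_def)
      have "u' = []"
      proof (rule ccontr)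
        assume "u' \<noteq> []"
        then have "Suc b \<in> insert 0 ((+) (Suc b) ` pts u')" using zero_pts by force
        then have "Suc b \<in> insert 0 ((+) (Suc a) ` pts t)" using P by simp
        then show False using pt by simp
      qed
      then show ?thesis using True Cons Cons.prems(2) by simp
    next
      case False
      have u'ne: "u' \<noteq> []"
      proof
        assume "u' = []"
        then have pu: "pts u' = {}" by (simp add: pts_def)
        have "Suc a \<in> insert 0 ((+) (Suc a) ` pts t)" using zero_pts False by force
        then have "Suc a \<in> insert 0 ((+) (Suc b) ` pts u')" by (metis P)
        then show False using pu by simp
      qed
      have "Suc a \<in> insert 0 ((+) (Suc b) ` pts u')"
        using P zero_pts[OF False] by (metis image_eqI insertI2 add_0_right)
      then have ab: "b \<le> a" by auto
      have "Suc b \<in> insert 0 ((+) (Suc a) ` pts t)"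
        using P zero_pts[OF u'ne] by (metis image_eqI insertI2 add_0_right)
      then have ba: "a \<le> b" by auto
      have eqab: "a = b" using ab ba by simp
      have "(+) (Suc a) ` pts t = (+) (Suc a) ` pts u'"
      proof -
        have A: "0 \<notin> (+) (Suc a) ` pts t" "0 \<notin> (+) (Suc a) ` pts u'" by auto
        show ?thesis using P eqab A by (metis insert_ident)
      qed
      moreover have inj: "inj ((+) (Suc a))" by (rule injI) simp
      ultimately have "pts t = pts u'" by (metis inj_image_eq_iff)
      moreover have "SS t = SS u'" using Cons.prems(2) Cons eqab by simp
      ultimately have "t = u'" using Cons.IH by blast
      then show ?thesis using Cons eqab by simp
    qed
  qed
qed

lemma RR_rot1:
  assumes "SS (a # t) = n"
  shows "RR n (x + Suc a) (t @ [a]) = RR n x (a # t)"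
proof -
  have e: "x + Suc a + SS t = x + n" using assms by simp
  have "(x + Suc a + SS t) mod n = x mod n" by (simp only: e mod_add_self2)
  then show ?thesis
    unfolding RR_def pts_snoc pts_Cons image_insert image_image
    by (simp add: add.assoc add.left_commute add.commute)
qed

lemma ps_Suc: "j < length t \<Longrightarrow> ps t (Suc j) = ps t j + Suc (t ! j)"
  by (simp add: ps_def take_Suc_conv_app_nth)

lemma RR_rotate:
  assumes "SS t = n"
  shows "j < length t \<Longrightarrow> RR n (x + ps t j) (rotate j t) = RR n x t"
proof (induction j)
  case 0
  then show ?case by (simp add: ps_def)
next
  case (Suc j)
  have jl: "j < length t" using Suc.prems by simp
  have ne: "rotate j t \<noteq> []" using jl by auto
  obtain c r where cr: "rotate j t = c # r" using ne by (cases "rotate j t") auto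
  have c: "c = t ! j"
  proof -
    have "rotate j t ! 0 = t ! ((j + 0) mod length t)" using jl nth_rotate[of 0 t j] by fastforce
    then show ?thesis using cr jl by simp
  qed
  have S: "SS (c # r) = n"
  proof -
    have "sum_list (rotate j t) = sum_list t"
      by (metis rotate_drop_take sum_list_append append_take_drop_id add.commute)
    then show ?thesis using cr assms by (metis length_rotate)
  qed
  have "rotate (Suc j) t = r @ [c]"
    using cr by (simp add: rotate_Suc)
  then have "RR n (x + ps t (Suc j)) (rotate (Suc j) t) = RR n (x + ps t j + Suc c) (r @ [c])"
    using ps_Suc[OF jl] c by (simp add: add.assoc)
  also have "\<dots> = RR n (x + ps t j) (c # r)" using RR_rot1[OF S] by simp
  also have "\<dots> = RR n x t" using Suc.IH jl cr by simp
  finally show ?case .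
qed

lemma mod_cancel_nat:
  fixes x p q n :: nat
  assumes "(x + p) mod n = (x + q) mod n"
  shows "p mod n = q mod n"
proof -
  have h: "(int x + int p) mod int n = (int x + int q) mod int n"
    using assms by (metis of_nat_add of_nat_mod)
  have "int p mod int n = ((int x + int p) - int x) mod int n" by simp
  also have "\<dots> = ((int x + int p) mod int n - int x) mod int n" by (simp add: mod_diff_left_eq)
  also have "\<dots> = ((int x + int q) mod int n - int x) mod int n" using h by simp
  also have "\<dots> = int q mod int n" by (simp add: mod_diff_left_eq)
  finally show ?thesis by (metis of_nat_eq_iff of_nat_mod)
qed
lemma RR_inj:
  assumes "SS t = n" "SS u = n" "RR n x t = RR n x u"
  shows "t = u"
proof -
  have "pts t \<subseteq> pts u" if st: "SS t = n" and su: "SS u = n" and e: "RR n x t = RR n x u" for t u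
  proof
    fix p assume p: "p \<in> pts t"
    then have "(x + p) mod n \<in> RR n x u" using e unfolding RR_def by auto
    then obtain q where q: "q \<in> pts u" "(x + p) mod n = (x + q) mod n" unfolding RR_def by auto
    have "p mod n = q mod n" using q(2) by (rule mod_cancel_nat)
    moreover have "p < n" "q < n" using pts_bound[OF p] pts_bound[OF q(1)] st su by auto
    ultimately show "p \<in> pts u" using q(1) by simp
  qed
  then have "pts t = pts u" using assms by blast
  then show ?thesis using pts_inj assms by simp
qed

definition gg :: "nat \<Rightarrow> nat \<Rightarrow> nat" where
  "gg n a = (if a = 0 then n else a)"

lemma phi_ps: "i \<ge> 1 \<Longrightarrow> i - 1 \<le> length t \<Longrightarrow> phi t i = ps t (i - 1)"
proof -
  have "m \<le> length t \<Longrightarrow> (\<Sum>k<m. t ! k + 1) = sum_list (take m t) + m" for m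
    by (induction m) (auto simp: take_Suc_conv_app_nth)
  then show "i \<ge> 1 \<Longrightarrow> i - 1 \<le> length t \<Longrightarrow> phi t i = ps t (i - 1)"
    by (simp add: phi_def ps_def)
qed

lemma coalition_RR:
  assumes "x \<in> {1..n}" "t \<noteq> []"
  shows "coalition n x t = gg n ` RR n x t"
proof -
  have mr: "modrep n a = gg n (a mod n)" for a by (simp add: modrep_def gg_def)
  have "{modrep n (x + phi t i) | i. 2 \<le> i \<and> i \<le> length t}
        = (\<lambda>i. modrep n (x + phi t i)) ` {2..length t}" by auto
  also have "\<dots> = (\<lambda>i. gg n ((x + ps t (i - 1)) mod n)) ` {2..length t}"
    by (rule image_cong) (auto simp: mr phi_ps)
  also have "\<dots> = (\<lambda>i. gg n ((x + ps t (i - 1)) mod n)) ` (Suc ` {1..<length t})"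
  proof -
    have "{2..length t} = Suc ` {1..<length t}"
    proof
      show "{2..length t} \<subseteq> Suc ` {1..<length t}"
      proof
        fix i assume "i \<in> {2..length t}"
        then have "i = Suc (i - 1)" "i - 1 \<in> {1..<length t}" by auto
        then show "i \<in> Suc ` {1..<length t}" by (metis imageI)
      qed
    qed auto
    then show ?thesis by (simp only:)
  qed
  also have "\<dots> = (\<lambda>j. gg n ((x + ps t j) mod n)) ` {1..<length t}"
    by (simp only: image_image diff_Suc_1)
  finally have A: "{modrep n (x + phi t i) | i. 2 \<le> i \<and> i \<le> length t}
     = (\<lambda>j. gg n ((x + ps t j) mod n)) ` {1..<length t}" .
  have x: "x = gg n ((x + ps t 0) mod n)" using assms by (cases "x = n") (auto simp: gg_def ps_def)
  have L: "{..<length t} = insert 0 {1..<length t}" using assms(2) by auto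
  have "gg n ` RR n x t = (\<lambda>j. gg n ((x + ps t j) mod n)) ` {..<length t}"
    unfolding RR_def pts_def by (simp add: image_image)
  also have "\<dots> = insert x ((\<lambda>j. gg n ((x + ps t j) mod n)) ` {1..<length t})"
    unfolding L image_insert using x by simp
  finally show ?thesis unfolding coalition_def A by simp
qed

lemma gg_inj: "inj_on (gg n) {..<n}"
  by (rule inj_onI) (auto simp: gg_def split: if_splits)

lemma RR_sub: "0 < n \<Longrightarrow> RR n x t \<subseteq> {..<n}"
  unfolding RR_def by auto

lemma RR_mod: "y mod n = z mod n \<Longrightarrow> RR n y t = RR n z t"
  unfolding RR_def by (metis mod_add_left_eq)

theorem lemma5:
  fixes n :: nat and t u :: "nat list"
  assumes "is_IA n t" and "is_IA n u" and "\<not> IA_equiv t u"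
  shows "{coalition n i t | i. i \<in> {1..n}} \<inter> {coalition n i u | i. i \<in> {1..n}} = {}"
proof (rule ccontr)
  assume "\<not> ?thesis"
  then obtain x y where x: "x \<in> {1..n}" and y: "y \<in> {1..n}"
    and C: "coalition n x t = coalition n y u" by blast
  have tne: "t \<noteq> []" and une: "u \<noteq> []" using assms(1,2) by (auto simp: is_IA_def)
  have St: "SS t = n" and Su: "SS u = n" using assms(1,2) by (auto simp: is_IA_def)
  have n0: "0 < n" using x by simp
  have "gg n ` RR n x t = gg n ` RR n y u"
    using C coalition_RR[OF x tne] coalition_RR[OF y une] by simp
  then have R: "RR n x t = RR n y u"
    using inj_on_image_eq_iff[OF gg_inj RR_sub[OF n0] RR_sub[OF n0]] by blast
  have "(y + 0) mod n \<in> RR n y u" unfolding RR_def using zero_pts[OF une] by blast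
  then have "y mod n \<in> RR n x t" using R by simp
  then obtain p where p: "p \<in> pts t" "y mod n = (x + p) mod n"
    unfolding RR_def by auto
  then obtain k where k: "k < length t" "p = ps t k" unfolding pts_def by auto
  have "RR n (x + p) (rotate k t) = RR n x t" using RR_rotate[OF St k(1)] k by simp
  also have "\<dots> = RR n (x + p) u" using R RR_mod[OF p(2)] by simp
  finally have "rotate k t = u"
  proof (rule RR_inj[rotated 2])
    have "sum_list (rotate k t) = sum_list t"
      by (metis rotate_drop_take sum_list_append append_take_drop_id add.commute)
    then show "SS (rotate k t) = n" using St by simp
  qed (rule Su)
  moreover have "rotate k t = drop k t @ take k t" using k(1) by (simp add: rotate_drop_take)
  ultimately have ud: "u = drop k t @ take k t" by simp
  have kl: "k \<le> length t - 1" using k(1) by simp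
  have "length t = length u" using \<open>rotate k t = u\<close> by (metis length_rotate)
  then have "IA_equiv t u" unfolding IA_equiv_def using ud kl by blast
  then show False using assms(3) by simp
qed

end
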